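(* Let $K\subseteq\mathbb{R}^m$ be closed, $f:\mathbb{R}^n\to\mathbb{R}$ and $G:\mathbb{R}^n\to\mathbb{R}^m$ be locally Lipschitz continuous and second-order directionally differentiable at $x^*$, and let $x^*$ be a locally optimal solution of the problem $\min f(x)$ s.t. $G(x)\in K$, with feasible set $\Psi=\{x:G(x)\in K\}$. Then: (i) for every $d\in\mathcal{T}_\Psi(x^* )$ with $f'(x^*;d)\le0$ and all $w\in\mathcal{T}^2_\Psi(x^*;d)$, one has $f''(x^*;d,w)\ge0$; (ii) if MSCQ for $\Psi$ holds at $x^*$, then for every $d\in\mathcal{C}(x^* ):=\{d\in\mathbb{R}^n: G'(x^*;d)\in\mathcal{T}_K(G(x^* )),\ f'(x^*;d)\le0\}$ and all $w\in\mathbb{R}^n$ satisfying $G''(x^*;d,w)\in\mathcal{T}^2_K(G(x^* );G'(x^*;d))$, one has $f''(x^*;d,w)\ge0$.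
   Context: Definitions. For $g:\mathbb{R}^n\to\mathbb{R}^k$: $g'(x;d)=\lim_{t\downarrow0}(g(x+td)-g(x))/t$; $g$ is second-order directionally differentiable at $x$ if for every $d$, $g'(x;d)$ exists and $g''(x;d,w):=\lim_{t\downarrow0}\frac{g(x+td+\frac12t^2w)-g(x)-tg'(x;d)}{\frac12t^2}$ exists for all $w$. For a set $C$ and $x^*\in C$: tangent cone $\mathcal{T}_C(x^* )=\{d:\exists t_k\downarrow0,d^k\to d,x^*+t_kd^k\in C\}$; outer second-order tangent set $\mathcal{T}^2_C(x^*;d)=\{w:\exists t_k\downarrow0,w^k\to w,x^*+t_kd+\frac12t_k^2w^k\in C\}$. MSCQ for $\Psi$ holds at $x^*$ if there exist a neighborhood $U$ of $x^*$ and $\kappa>0$ with $\mathrm{dist}(x,\Psi)\le\kappa\,\mathrm{dist}(G(x),K)$ for all $x\in U$. *)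

theory Defs
  imports "HOL-Analysis.Analysis"
begin

definition has_dir_deriv :: "('a::real_normed_vector \<Rightarrow> 'b::real_normed_vector) \<Rightarrow> 'a \<Rightarrow> 'a \<Rightarrow> 'b \<Rightarrow> bool" where
  "has_dir_deriv g x d v \<longleftrightarrow>
     ((\<lambda>t. (1 / t) *\<^sub>R (g (x + t *\<^sub>R d) - g x)) \<longlongrightarrow> v) (at_right (0::real))"

definition dir_deriv :: "('a::real_normed_vector \<Rightarrow> 'b::real_normed_vector) \<Rightarrow> 'a \<Rightarrow> 'a \<Rightarrow> 'b" where
  "dir_deriv g x d = (THE v. has_dir_deriv g x d v)"

definition has_dir_deriv2 :: "('a::real_normed_vector \<Rightarrow> 'b::real_normed_vector) \<Rightarrow> 'a \<Rightarrow> 'a \<Rightarrow> 'a \<Rightarrow> 'b \<Rightarrow> bool" where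
  "has_dir_deriv2 g x d w v \<longleftrightarrow>
     ((\<lambda>t. (2 / t\<^sup>2) *\<^sub>R (g (x + t *\<^sub>R d + ((1/2) * t\<^sup>2) *\<^sub>R w) - g x - t *\<^sub>R dir_deriv g x d)) \<longlongrightarrow> v)
       (at_right (0::real))"

definition dir_deriv2 :: "('a::real_normed_vector \<Rightarrow> 'b::real_normed_vector) \<Rightarrow> 'a \<Rightarrow> 'a \<Rightarrow> 'a \<Rightarrow> 'b" where
  "dir_deriv2 g x d w = (THE v. has_dir_deriv2 g x d w v)"

definition second_order_dir_diff :: "('a::real_normed_vector \<Rightarrow> 'b::real_normed_vector) \<Rightarrow> 'a \<Rightarrow> bool" where
  "second_order_dir_diff g x \<longleftrightarrow>
     (\<forall>d. (\<exists>v. has_dir_deriv g x d v) \<and> (\<forall>w. \<exists>v. has_dir_deriv2 g x d w v))"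

definition locally_lipschitz :: "('a::metric_space \<Rightarrow> 'b::metric_space) \<Rightarrow> bool" where
  "locally_lipschitz g \<longleftrightarrow>
     (\<forall>x. \<exists>U L. open U \<and> x \<in> U \<and> (\<forall>y\<in>U. \<forall>z\<in>U. dist (g y) (g z) \<le> L * dist y z))"

definition tangent_cone :: "'a::real_normed_vector set \<Rightarrow> 'a \<Rightarrow> 'a set" where
  "tangent_cone C x = {d. \<exists>t dk. (\<forall>k. t k > 0) \<and> t \<longlonglongrightarrow> 0 \<and> dk \<longlonglongrightarrow> d \<and>
                                 (\<forall>k. x + t k *\<^sub>R dk k \<in> C)}"

definition second_tangent_set :: "'a::real_normed_vector set \<Rightarrow> 'a \<Rightarrow> 'a \<Rightarrow> 'a set" where
  "second_tangent_set C x d = {w. \<exists>t wk. (\<forall>k. t k > 0) \<and> t \<longlonglongrightarrow> 0 \<and> wk \<longlonglongrightarrow> w \<and>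
                                 (\<forall>k. x + t k *\<^sub>R d + ((1/2) * (t k)\<^sup>2) *\<^sub>R wk k \<in> C)}"

definition MSCQ :: "('a::real_normed_vector \<Rightarrow> 'b::real_normed_vector) \<Rightarrow> 'b set \<Rightarrow> 'a \<Rightarrow> bool" where
  "MSCQ G K xs \<longleftrightarrow> (\<exists>U \<kappa>. open U \<and> xs \<in> U \<and> \<kappa> > 0 \<and>
      (\<forall>x\<in>U. infdist x {y. G y \<in> K} \<le> \<kappa> * infdist (G x) K))"

definition local_min_on :: "('a::metric_space \<Rightarrow> real) \<Rightarrow> 'a set \<Rightarrow> 'a \<Rightarrow> bool" where
  "local_min_on f S xs \<longleftrightarrow> xs \<in> S \<and> (\<exists>e>0. \<forall>x\<in>S. dist x xs < e \<longrightarrow> f xs \<le> f x)"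

end

theory Submission
  imports Defs
begin

lemma dd_ok:
  assumes "\<exists>v. has_dir_deriv g x d v"
  shows "has_dir_deriv g x d (dir_deriv g x d)"
  unfolding dir_deriv_def
proof (rule theI')
  show "\<exists>!v. has_dir_deriv g x d v"
  proof -
    obtain v where v: "has_dir_deriv g x d v" using assms by blast
    show ?thesis
    proof (rule ex1I[of _ v])
      show "has_dir_deriv g x d v" by (rule v)
      fix u assume "has_dir_deriv g x d u"
      then show "u = v" using v unfolding has_dir_deriv_def
        by (intro tendsto_unique[OF trivial_limit_at_right_real]) 
    qed
  qed
qed

lemma dd2_ok:
  assumes "\<exists>v. has_dir_deriv2 g x d w v"
  shows "has_dir_deriv2 g x d w (dir_deriv2 g x d w)"
  unfolding dir_deriv2_def
proof (rule theI')
  show "\<exists>!v. has_dir_deriv2 g x d w v"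
  proof -
    obtain v where v: "has_dir_deriv2 g x d w v" using assms by blast
    show ?thesis
    proof (rule ex1I[of _ v])
      show "has_dir_deriv2 g x d w v" by (rule v)
      fix u assume "has_dir_deriv2 g x d w u"
      then show "u = v" using v unfolding has_dir_deriv2_def
        by (intro tendsto_unique[OF trivial_limit_at_right_real]) 
    qed
  qed
qed

lemma seq_at_right:
  fixes t :: "nat \<Rightarrow> real"
  assumes "\<forall>k. t k > 0" "t \<longlonglongrightarrow> 0"
  shows "filterlim t (at_right 0) sequentially"
  using assms by (intro tendsto_imp_filterlim_at_right) auto

lemma keyB:
  fixes f :: "'n::real_normed_vector \<Rightarrow> real"
  assumes lip: "locally_lipschitz f"
    and h2: "has_dir_deriv2 f x d w v"
    and neg: "dir_deriv f x d \<le> 0"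
    and lm: "local_min_on f S x"
    and ws: "w \<in> second_tangent_set S x d"
  shows "v \<ge> 0"
proof -
  obtain t wk where tpos: "\<forall>k. t k > 0" and t0: "t \<longlonglongrightarrow> 0" and wk: "wk \<longlonglongrightarrow> w"
    and inS: "\<forall>k. x + t k *\<^sub>R d + ((1/2) * (t k)\<^sup>2) *\<^sub>R wk k \<in> S"
    using ws unfolding second_tangent_set_def by blast
  obtain e where e: "e > 0" "\<forall>y\<in>S. dist y x < e \<longrightarrow> f x \<le> f y"
    using lm unfolding local_min_on_def by blast
  have "\<exists>U L. open U \<and> x \<in> U \<and> (\<forall>y\<in>U. \<forall>z\<in>U. dist (f y) (f z) \<le> L * dist y z)"
    using lip unfolding locally_lipschitz_def by (rule spec)
  then obtain U L where U: "open U" "x \<in> U" "\<forall>y\<in>U. \<forall>z\<in>U. dist (f y) (f z) \<le> L * dist y z"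
    by blast
  define q where "q = (\<lambda>t. (2 / t\<^sup>2) *\<^sub>R (f (x + t *\<^sub>R d + ((1/2) * t\<^sup>2) *\<^sub>R w) - f x - t *\<^sub>R dir_deriv f x d))"
  have hq: "(q \<longlongrightarrow> v) (at_right 0)"
    using h2 unfolding has_dir_deriv2_def q_def by simp
  have qlim: "(q \<circ> t) \<longlonglongrightarrow> v"
    unfolding comp_def by (rule filterlim_compose[OF hq seq_at_right[OF tpos t0]])
  define y where "y = (\<lambda>k. x + t k *\<^sub>R d + ((1/2) * (t k)\<^sup>2) *\<^sub>R wk k)"
  define p where "p = (\<lambda>k. x + t k *\<^sub>R d + ((1/2) * (t k)\<^sup>2) *\<^sub>R w)"
  have ylim: "y \<longlonglongrightarrow> x"
  proof -
    have "y \<longlonglongrightarrow> x + 0 *\<^sub>R d + ((1/2) * 0\<^sup>2) *\<^sub>R w"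
      unfolding y_def by (intro tendsto_intros t0 wk)
    then show ?thesis by simp
  qed
  have plim: "p \<longlonglongrightarrow> x"
  proof -
    have "p \<longlonglongrightarrow> x + 0 *\<^sub>R d + ((1/2) * 0\<^sup>2) *\<^sub>R w"
      unfolding p_def by (intro tendsto_intros t0)
    then show ?thesis by simp
  qed
  have ev1: "eventually (\<lambda>k. y k \<in> U) sequentially"
    using ylim U(1,2) by (rule topological_tendstoD)
  have ev2: "eventually (\<lambda>k. p k \<in> U) sequentially"
    using plim U(1,2) by (rule topological_tendstoD)
  have ev3: "eventually (\<lambda>k. dist (y k) x < e) sequentially"
    using ylim e(1) by (rule tendstoD)
  have evq: "eventually (\<lambda>k. - L * norm (w - wk k) \<le> (q \<circ> t) k) sequentially"
    using ev1 ev2 ev3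
  proof eventually_elim
    case (elim k)
    have tk: "t k > 0" using tpos by auto
    have fy: "f x \<le> f (y k)" using e(2) inS elim(3) unfolding y_def by auto
    have "dist (f (p k)) (f (y k)) \<le> L * dist (p k) (y k)" using U(3) elim by auto
    also have "dist (p k) (y k) = ((1/2) * (t k)\<^sup>2) * norm (w - wk k)"
    proof -
      have "p k - y k = ((1/2) * (t k)\<^sup>2) *\<^sub>R (w - wk k)"
        unfolding p_def y_def by (simp add: algebra_simps)
      then show ?thesis by (simp add: dist_norm)
    qed
    finally have "f (p k) \<ge> f (y k) - L * (((1/2) * (t k)\<^sup>2) * norm (w - wk k))"
      unfolding dist_real_def by linarith
    then have A: "f (p k) - f x - t k * dir_deriv f x d \<ge> - ((1/2) * (t k)\<^sup>2) * (L * norm (w - wk k))"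
    proof -
      have "t k * dir_deriv f x d \<le> 0" using neg tk mult_nonneg_nonpos[of "t k" "dir_deriv f x d"] by simp
      then show ?thesis using fy \<open>f (p k) \<ge> _\<close> by (simp add: algebra_simps)
    qed
    have "(q \<circ> t) k = (2 / (t k)\<^sup>2) * (f (p k) - f x - t k * dir_deriv f x d)"
      unfolding q_def p_def by simp
    also have "\<dots> \<ge> (2 / (t k)\<^sup>2) * (- ((1/2) * (t k)\<^sup>2) * (L * norm (w - wk k)))"
      using A tk by (intro mult_left_mono) auto
    also have "(2 / (t k)\<^sup>2) * (- ((1/2) * (t k)\<^sup>2) * (L * norm (w - wk k))) = - L * norm (w - wk k)"
      using tk by (simp add: field_simps)
    finally show ?case .
  qed
  have lim2: "(\<lambda>k. - L * norm (w - wk k)) \<longlonglongrightarrow> - L * norm (w - w)"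
    by (intro tendsto_intros wk)
  have "- L * norm (w - w) \<le> v"
    by (rule tendsto_le[OF trivial_limit_sequentially qlim lim2 evq])
  then show ?thesis by simp
qed

lemma infdist_approx:
  fixes p :: "'a::metric_space"
  assumes "S \<noteq> {}" "\<epsilon> > 0"
  shows "\<exists>z\<in>S. dist p z < infdist p S + \<epsilon>"
proof -
  have bdd: "bdd_below ((\<lambda>a. dist p a) ` S)"
    by (rule bdd_belowI[of _ 0]) auto
  have "(INF a\<in>S. dist p a) < infdist p S + \<epsilon>"
    using assms(2) infdist_notempty[OF assms(1), of p] by simp
  then show ?thesis using cINF_less_iff[OF assms(1) bdd] by blast
qed

lemma keyC:
  fixes G :: "'n::real_normed_vector \<Rightarrow> 'm::real_normed_vector"
  assumes ms: "MSCQ G K x" and xin: "G x \<in> K"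
    and h2: "has_dir_deriv2 G x d w a"
    and wa: "a \<in> second_tangent_set K (G x) (dir_deriv G x d)"
  shows "w \<in> second_tangent_set {y. G y \<in> K} x d"
proof -
  define S where "S = {y. G y \<in> K}"
  define D where "D = dir_deriv G x d"
  have Sne: "S \<noteq> {}" using xin unfolding S_def by blast
  obtain t vk where tpos: "\<forall>k. t k > 0" and t0: "t \<longlonglongrightarrow> 0" and vk: "vk \<longlonglongrightarrow> a"
    and inK: "\<forall>k. G x + t k *\<^sub>R D + ((1/2) * (t k)\<^sup>2) *\<^sub>R vk k \<in> K"
    using wa unfolding second_tangent_set_def D_def by blast
  obtain U \<kappa> where U: "open U" "x \<in> U" "\<kappa> > 0"
    and Ub: "\<forall>y\<in>U. infdist y S \<le> \<kappa> * infdist (G y) K"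
    using ms unfolding MSCQ_def S_def by blast
  define r where "r = (\<lambda>s. (2 / s\<^sup>2) *\<^sub>R (G (x + s *\<^sub>R d + ((1/2) * s\<^sup>2) *\<^sub>R w) - G x - s *\<^sub>R D))"
  have hr: "(r \<longlongrightarrow> a) (at_right 0)"
    using h2 unfolding has_dir_deriv2_def r_def D_def by simp
  have rlim: "(\<lambda>k. r (t k)) \<longlonglongrightarrow> a"
    by (rule filterlim_compose[OF hr seq_at_right[OF tpos t0]])
  define p where "p = (\<lambda>k. x + t k *\<^sub>R d + ((1/2) * (t k)\<^sup>2) *\<^sub>R w)"
  have plim: "p \<longlonglongrightarrow> x"
  proof -
    have "p \<longlonglongrightarrow> x + 0 *\<^sub>R d + ((1/2) * 0\<^sup>2) *\<^sub>R w"
      unfolding p_def by (intro tendsto_intros t0)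
    then show ?thesis by simp
  qed
  have evU: "eventually (\<lambda>k. p k \<in> U) sequentially"
    using plim U(1,2) by (rule topological_tendstoD)
  have ex: "\<forall>k. \<exists>z. z \<in> S \<and> dist (p k) z < infdist (p k) S + (t k)^3"
  proof
    fix k
    have "(t k)^3 > 0" using tpos by simp
    then show "\<exists>z. z \<in> S \<and> dist (p k) z < infdist (p k) S + (t k)^3"
      using infdist_approx[OF Sne] by blast
  qed
  obtain z where z: "\<forall>k. z k \<in> S \<and> dist (p k) (z k) < infdist (p k) S + (t k)^3"
    using choice[OF ex] by blast
  define wk where "wk = (\<lambda>k. (2 / (t k)\<^sup>2) *\<^sub>R (z k - x - t k *\<^sub>R d))"
  have memb: "\<forall>k. x + t k *\<^sub>R d + ((1/2) * (t k)\<^sup>2) *\<^sub>R wk k \<in> S"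
  proof
    fix k
    have tk: "t k \<noteq> 0" using tpos by (metis less_irrefl)
    have "((1/2) * (t k)\<^sup>2) *\<^sub>R wk k = z k - x - t k *\<^sub>R d"
      unfolding wk_def using tk by (simp add: field_simps)
    then show "x + t k *\<^sub>R d + ((1/2) * (t k)\<^sup>2) *\<^sub>R wk k \<in> S"
      using z by simp
  qed
  have evb: "eventually (\<lambda>k. norm (wk k - w) \<le> \<kappa> * norm (r (t k) - vk k) + 2 * t k) sequentially"
    using evU
  proof eventually_elim
    case (elim k)
    define T where "T = t k"
    have T: "T > 0" using tpos T_def by simp
    have e1: "wk k - w = (2 / T\<^sup>2) *\<^sub>R (z k - p k)"
    proof -
      have "(2 / T\<^sup>2) *\<^sub>R (z k - p k) = (2 / T\<^sup>2) *\<^sub>R (z k - x - T *\<^sub>R d) - (2 / T\<^sup>2) *\<^sub>R (((1/2) * T\<^sup>2) *\<^sub>R w)"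
        unfolding p_def T_def[symmetric] by (simp add: algebra_simps)
      also have "(2 / T\<^sup>2) *\<^sub>R (((1/2) * T\<^sup>2) *\<^sub>R w) = w"
        using T by simp
      finally show ?thesis unfolding wk_def T_def by simp
    qed
    have nrm: "norm (wk k - w) = (2 / T\<^sup>2) * dist (p k) (z k)"
      unfolding e1 using T by (simp add: dist_norm norm_minus_commute)
    have Gp: "G (p k) = G x + T *\<^sub>R D + ((1/2) * T\<^sup>2) *\<^sub>R r T"
    proof -
      have "((1/2) * T\<^sup>2) *\<^sub>R r T = G (p k) - G x - T *\<^sub>R D"
        unfolding r_def p_def T_def[symmetric] using T by simp
      then show ?thesis by (simp add: algebra_simps)
    qed
    have "infdist (G (p k)) K \<le> dist (G (p k)) (G x + T *\<^sub>R D + ((1/2) * T\<^sup>2) *\<^sub>R vk k)"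
      using inK T_def by (intro infdist_le) auto
    also have "\<dots> = norm (((1/2) * T\<^sup>2) *\<^sub>R (r T - vk k))"
      unfolding Gp dist_norm by (simp add: algebra_simps)
    also have "\<dots> = ((1/2) * T\<^sup>2) * norm (r T - vk k)"
      by simp
    finally have i1: "infdist (G (p k)) K \<le> ((1/2) * T\<^sup>2) * norm (r T - vk k)" .
    have "dist (p k) (z k) < infdist (p k) S + T^3" using z T_def by simp
    also have "infdist (p k) S \<le> \<kappa> * infdist (G (p k)) K" using Ub elim by simp
    also have "\<kappa> * infdist (G (p k)) K \<le> \<kappa> * (((1/2) * T\<^sup>2) * norm (r T - vk k))"
      using i1 U(3) by (intro mult_left_mono) auto
    finally have "dist (p k) (z k) < \<kappa> * (((1/2) * T\<^sup>2) * norm (r T - vk k)) + T^3" by simp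
    then have "(2 / T\<^sup>2) * dist (p k) (z k) \<le> (2 / T\<^sup>2) * (\<kappa> * (((1/2) * T\<^sup>2) * norm (r T - vk k)) + T^3)"
      using T by (intro mult_left_mono) auto
    also have "\<dots> = \<kappa> * norm (r T - vk k) + 2 * T"
      using T by (simp add: field_simps power2_eq_square power3_eq_cube)
    finally show ?case unfolding nrm T_def .
  qed
  have glim: "(\<lambda>k. \<kappa> * norm (r (t k) - vk k) + 2 * t k) \<longlonglongrightarrow> \<kappa> * norm (a - a) + 2 * 0"
    by (intro tendsto_intros rlim vk t0)
  have "(\<lambda>k. wk k - w) \<longlonglongrightarrow> 0"
    by (rule Lim_null_comparison[OF evb]) (use glim in simp)
  then have "wk \<longlonglongrightarrow> w" by (rule LIM_zero_cancel)
  then show ?thesis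
    using tpos t0 memb unfolding second_tangent_set_def S_def by blast
qed

theorem theorem3p2:
  fixes f :: "'n::euclidean_space \<Rightarrow> real"
    and G :: "'n \<Rightarrow> 'm::euclidean_space"
    and K :: "'m set"
    and xs :: 'n
  assumes "closed K"
    and "locally_lipschitz f" and "locally_lipschitz G"
    and "second_order_dir_diff f xs" and "second_order_dir_diff G xs"
    and "local_min_on f {x. G x \<in> K} xs"
  shows "(\<forall>d \<in> tangent_cone {x. G x \<in> K} xs. dir_deriv f xs d \<le> 0 \<longrightarrow>
            (\<forall>w \<in> second_tangent_set {x. G x \<in> K} xs d. dir_deriv2 f xs d w \<ge> 0))
       \<and> (MSCQ G K xs \<longrightarrow>
            (\<forall>d \<in> {d. dir_deriv G xs d \<in> tangent_cone K (G xs) \<and> dir_deriv f xs d \<le> 0}.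
               \<forall>w. dir_deriv2 G xs d w \<in> second_tangent_set K (G xs) (dir_deriv G xs d)
                   \<longrightarrow> dir_deriv2 f xs d w \<ge> 0))"
proof -
  have main: "dir_deriv2 f xs d w \<ge> 0"
    if "dir_deriv f xs d \<le> 0" "w \<in> second_tangent_set {x. G x \<in> K} xs d" for d w
  proof -
    have "has_dir_deriv2 f xs d w (dir_deriv2 f xs d w)"
      using assms(4) unfolding second_order_dir_diff_def by (intro dd2_ok) blast
    then show ?thesis using keyB[OF assms(2) _ that(1) assms(6) that(2)] by blast
  qed
  have xin: "G xs \<in> K" using assms(6) unfolding local_min_on_def by simp
  show ?thesis
  proof (intro conjI ballI impI allI)
    fix d w assume "dir_deriv f xs d \<le> 0" "w \<in> second_tangent_set {x. G x \<in> K} xs d"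
    then show "dir_deriv2 f xs d w \<ge> 0" by (rule main)
  next
    fix d w
    assume ms: "MSCQ G K xs"
      and d: "d \<in> {d. dir_deriv G xs d \<in> tangent_cone K (G xs) \<and> dir_deriv f xs d \<le> 0}"
      and w: "dir_deriv2 G xs d w \<in> second_tangent_set K (G xs) (dir_deriv G xs d)"
    have h: "has_dir_deriv2 G xs d w (dir_deriv2 G xs d w)"
      using assms(5) unfolding second_order_dir_diff_def by (intro dd2_ok) blast
    have "w \<in> second_tangent_set {x. G x \<in> K} xs d"
      by (rule keyC[OF ms xin h w])
    then show "dir_deriv2 f xs d w \<ge> 0" using d main by blast
  qed
qed

end
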